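(* Let $G$ be a Tanner graph with largest right (check-node) degree $d_r^+$. If $p$ is any lift-realizable pseudocodeword of $G$ and $b$ is its maximum component, then the smallest degree of a lift of $G$ in which $p$ is realized is at most $\frac{b\,d_r^+}{2}$.
   Context: A Tanner graph $G$ is a finite bipartite graph with variable nodes $v_1,\dots,v_n$ and check nodes; it defines the binary code of all $x\in\{0,1\}^n$ such that every check node has an even number of neighbours $v_i$ with $x_i=1$. A degree-$\ell$ lift of $G$ replaces each node by a cloud of $\ell$ copies and each edge $(x,y)$ by a perfect matching between the clouds. A lift-realizable pseudocodeword $p\in\mathbb{Z}_{\ge0}^n$ is obtained (realized) from a codeword of the code of some finite lift by letting $p_i$ be the number of copies of $v_i$ assigned 1. *)

theory Defs
  imports Complex_Main
begin

definition tanner_graph :: "nat \<Rightarrow> nat \<Rightarrow> (nat \<times> nat) set \<Rightarrow> bool" where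
  "tanner_graph n m E \<longleftrightarrow> E \<subseteq> {..<n} \<times> {..<m}"

definition check_degree :: "(nat \<times> nat) set \<Rightarrow> nat \<Rightarrow> nat" where
  "check_degree E j = card {i. (i, j) \<in> E}"

definition max_check_degree :: "nat \<Rightarrow> (nat \<times> nat) set \<Rightarrow> nat" where
  "max_check_degree m E = Max (insert 0 (check_degree E ` {..<m}))"

text \<open>A degree-l lift: each edge e is replaced by a perfect matching between the
  clouds, given by a bijection pi e on the copy indices {..<l}: copy a of the
  variable node is joined to copy (pi e a) of the check node.\<close>
definition is_lift :: "(nat \<times> nat) set \<Rightarrow> nat \<Rightarrow> ((nat \<times> nat) \<Rightarrow> nat \<Rightarrow> nat) \<Rightarrow> bool" where
  "is_lift E l \<pi> \<longleftrightarrow> 1 \<le> l \<and> (\<forall>e\<in>E. bij_betw (\<pi> e) {..<l} {..<l})"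

text \<open>x i a = True means copy a of variable node i is assigned 1.\<close>
definition lift_codeword ::
  "nat \<Rightarrow> (nat \<times> nat) set \<Rightarrow> nat \<Rightarrow> ((nat \<times> nat) \<Rightarrow> nat \<Rightarrow> nat) \<Rightarrow> (nat \<Rightarrow> nat \<Rightarrow> bool) \<Rightarrow> bool" where
  "lift_codeword m E l \<pi> x \<longleftrightarrow>
     (\<forall>j<m. \<forall>c<l. even (card {(i, a). (i, j) \<in> E \<and> a < l \<and> \<pi> (i, j) a = c \<and> x i a}))"

definition realized_in_lift ::
  "nat \<Rightarrow> nat \<Rightarrow> (nat \<times> nat) set \<Rightarrow> nat \<Rightarrow> (nat \<Rightarrow> nat) \<Rightarrow> bool" where
  "realized_in_lift n m E l p \<longleftrightarrow>
     (\<exists>\<pi> x. is_lift E l \<pi> \<and> lift_codeword m E l \<pi> x \<and>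
            (\<forall>i<n. p i = card {a. a < l \<and> x i a}))"

definition lift_realizable :: "nat \<Rightarrow> nat \<Rightarrow> (nat \<times> nat) set \<Rightarrow> (nat \<Rightarrow> nat) \<Rightarrow> bool" where
  "lift_realizable n m E p \<longleftrightarrow> (\<exists>l. realized_in_lift n m E l p)"

definition max_component :: "nat \<Rightarrow> (nat \<Rightarrow> nat) \<Rightarrow> nat" where
  "max_component n p = Max (insert 0 (p ` {..<n}))"

end

theory Submission
  imports Defs
begin

lemma perm_exists:
  fixes L :: nat and X Y :: "nat set"
  assumes "X \<subseteq> {..<L}" "Y \<subseteq> {..<L}" "card X = card Y"
  shows "\<exists>\<sigma>. bij_betw \<sigma> {..<L} {..<L} \<and> \<sigma> ` X = Y"
proof -
  have fX: "finite X" "finite Y" using assms(1,2) finite_subset[of _ "{..<L}"] by auto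
  obtain g where g: "bij_betw g X Y" using finite_same_card_bij[OF fX assms(3)] by blast
  have "card ({..<L} - X) = card ({..<L} - Y)"
    using assms fX by (simp add: card_Diff_subset)
  then obtain h where h: "bij_betw h ({..<L} - X) ({..<L} - Y)"
    using finite_same_card_bij by blast
  define \<sigma> where "\<sigma> = (\<lambda>a. if a \<in> X then g a else h a)"
  have "bij_betw \<sigma> X Y = bij_betw g X Y" by (rule bij_betw_cong) (simp add: \<sigma>_def)
  with g have b1: "bij_betw \<sigma> X Y" by simp
  have "bij_betw \<sigma> ({..<L} - X) ({..<L} - Y) = bij_betw h ({..<L} - X) ({..<L} - Y)"
    by (rule bij_betw_cong) (simp add: \<sigma>_def)
  with h have b2: "bij_betw \<sigma> ({..<L} - X) ({..<L} - Y)" by simp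
  have "bij_betw \<sigma> (X \<union> ({..<L} - X)) (Y \<union> ({..<L} - Y))"
    by (rule bij_betw_combine[OF b1 b2]) auto
  moreover have "X \<union> ({..<L} - X) = {..<L}" "Y \<union> ({..<L} - Y) = {..<L}" using assms by auto
  ultimately show ?thesis using b1 by (auto simp: bij_betw_def)
qed

lemma card_fibers:
  assumes "finite W" "finite B" "f ` W \<subseteq> B"
  shows "card W = (\<Sum>c\<in>B. card {w\<in>W. f w = c})"
proof -
  have "W = (\<Union>c\<in>B. {w\<in>W. f w = c})" using assms by auto
  then have "card W = card (\<Union>c\<in>B. {w\<in>W. f w = c})" by simp
  also have "\<dots> = (\<Sum>c\<in>B. card {w\<in>W. f w = c})"
    by (rule card_UN_disjoint) (use assms in auto)
  finally show ?thesis .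
qed


definition Oset :: "(nat \<times> nat) set \<Rightarrow> nat \<Rightarrow> ((nat \<times> nat) \<Rightarrow> nat \<Rightarrow> nat) \<Rightarrow> (nat \<Rightarrow> nat \<Rightarrow> bool) \<Rightarrow> nat \<Rightarrow> nat \<Rightarrow> (nat \<times> nat) set" where
  "Oset E l \<pi> x j c = {(i, a). (i, j) \<in> E \<and> a < l \<and> \<pi> (i, j) a = c \<and> x i a}"

definition Act :: "(nat \<times> nat) set \<Rightarrow> nat \<Rightarrow> ((nat \<times> nat) \<Rightarrow> nat \<Rightarrow> nat) \<Rightarrow> (nat \<Rightarrow> nat \<Rightarrow> bool) \<Rightarrow> nat \<Rightarrow> nat set" where
  "Act E l \<pi> x j = {c. c < l \<and> Oset E l \<pi> x j c \<noteq> {}}"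

lemma count_bound:
  assumes hE: "E \<subseteq> {..<n} \<times> {..<m}"
    and hl: "is_lift E l \<pi>" and hc: "lift_codeword m E l \<pi> x"
    and hp: "\<forall>i<n. p i = card {a. a < l \<and> x i a}"
    and j: "j < m"
  shows "2 * card (Act E l \<pi> x j) \<le> (\<Sum>i\<in>{i. (i, j) \<in> E}. p i)"
proof -
  define N where "N = {i. (i, j) \<in> E}"
  have "N \<subseteq> {..<n}" using hE unfolding N_def by auto
  then have finN: "finite N" using finite_subset by blast
  define W where "W = Sigma N (\<lambda>i. {a. a < l \<and> x i a})"
  have finW: "finite W" unfolding W_def using finN by auto
  define f where "f = (\<lambda>w. \<pi> (fst w, j) (snd w))"
  have fW: "f ` W \<subseteq> {..<l}"
  proof
    fix c assume "c \<in> f ` W"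
    then obtain i a where "(i, j) \<in> E" "a < l" "c = \<pi> (i, j) a"
      unfolding W_def N_def f_def by auto
    then show "c \<in> {..<l}" using hl unfolding is_lift_def bij_betw_def by auto
  qed
  have fib: "{w\<in>W. f w = c} = Oset E l \<pi> x j c" for c
    unfolding W_def N_def f_def Oset_def by auto
  have s1: "card W = (\<Sum>c\<in>{..<l}. card (Oset E l \<pi> x j c))"
    using card_fibers[OF finW _ fW] fib by simp
  have s2: "(\<Sum>c\<in>{..<l}. card (Oset E l \<pi> x j c)) \<ge> (\<Sum>c\<in>Act E l \<pi> x j. card (Oset E l \<pi> x j c))"
    by (rule sum_mono2) (auto simp: Act_def)
  have s3: "(\<Sum>c\<in>Act E l \<pi> x j. card (Oset E l \<pi> x j c)) \<ge> (\<Sum>c\<in>Act E l \<pi> x j. 2)"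
  proof (rule sum_mono)
    fix c assume c: "c \<in> Act E l \<pi> x j"
    have "Oset E l \<pi> x j c \<subseteq> W" unfolding Oset_def W_def N_def by auto
    then have "finite (Oset E l \<pi> x j c)" using finW finite_subset by blast
    moreover have "Oset E l \<pi> x j c \<noteq> {}" using c by (auto simp: Act_def)
    ultimately have "card (Oset E l \<pi> x j c) \<noteq> 0" by simp
    moreover have "even (card (Oset E l \<pi> x j c))"
      using hc j c unfolding lift_codeword_def Oset_def Act_def by auto
    ultimately show "2 \<le> card (Oset E l \<pi> x j c)" by (auto elim!: evenE)
  qed
  have "2 * card (Act E l \<pi> x j) \<le> card W" using s1 s2 s3 by (simp add: mult.commute)
  also have "card W = (\<Sum>i\<in>N. card {a. a < l \<and> x i a})"
    unfolding W_def using finN by simp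
  also have "\<dots> = (\<Sum>i\<in>N. p i)"
    by (rule sum.cong) (use hp hE in \<open>auto simp: N_def\<close>)
  finally show ?thesis unfolding N_def .
qed


lemma construct:
  assumes hE: "E \<subseteq> {..<n} \<times> {..<m}"
    and hl: "is_lift E l \<pi>" and hc: "lift_codeword m E l \<pi> x"
    and hp: "\<forall>i<n. p i = card {a. a < l \<and> x i a}"
    and L1: "1 \<le> L" and pL: "\<forall>i<n. p i \<le> L"
    and AL: "\<forall>j<m. card (Act E l \<pi> x j) \<le> L"
  shows "realized_in_lift n m E L p"
proof -
  have finA: "finite (Act E l \<pi> x j)" for j unfolding Act_def by auto
  have "\<forall>j. \<exists>g. j < m \<longrightarrow> inj_on g (Act E l \<pi> x j) \<and> g ` Act E l \<pi> x j \<subseteq> {..<L}"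
  proof
    fix j
    show "\<exists>g. j < m \<longrightarrow> inj_on g (Act E l \<pi> x j) \<and> g ` Act E l \<pi> x j \<subseteq> {..<L}"
    proof (cases "j < m")
      case True
      then show ?thesis using card_le_inj[OF finA[of j], of "{..<L}"] AL by auto
    qed simp
  qed
  then obtain f where f: "\<And>j. j < m \<Longrightarrow> inj_on (f j) (Act E l \<pi> x j) \<and> f j ` Act E l \<pi> x j \<subseteq> {..<L}"
    by metis
  define T where "T i j = \<pi> (i, j) ` {a. a < l \<and> x i a}" for i j
  have bijE: "bij_betw (\<pi> e) {..<l} {..<l}" if "e \<in> E" for e
    using hl that unfolding is_lift_def by auto
  have TA: "T i j \<subseteq> Act E l \<pi> x j" if "(i, j) \<in> E" for i j
  proof
    fix c assume "c \<in> T i j"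
    then obtain a where a: "a < l" "x i a" "c = \<pi> (i, j) a" unfolding T_def by auto
    then have "c < l" using bijE[OF that] unfolding bij_betw_def by auto
    moreover have "(i, a) \<in> Oset E l \<pi> x j c" using a that unfolding Oset_def by auto
    ultimately show "c \<in> Act E l \<pi> x j" unfolding Act_def by auto
  qed
  have cardT: "card (f j ` T i j) = p i" if "(i, j) \<in> E" for i j
  proof -
    have ij: "i < n" "j < m" using that hE by auto
    have "inj_on (f j) (T i j)" using f[OF ij(2)] TA[OF that] inj_on_subset by blast
    then have "card (f j ` T i j) = card (T i j)" by (rule card_image)
    also have "\<dots> = card {a. a < l \<and> x i a}" unfolding T_def
      by (rule card_image) (rule inj_on_subset[of _ "{..<l}"], use bijE[OF that] in \<open>auto simp: bij_betw_def\<close>)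
    finally show ?thesis using hp ij by simp
  qed
  have "\<forall>e. \<exists>\<sigma>. e \<in> E \<longrightarrow> bij_betw \<sigma> {..<L} {..<L} \<and> \<sigma> ` {..<p (fst e)} = f (snd e) ` T (fst e) (snd e)"
  proof
    fix e
    show "\<exists>\<sigma>. e \<in> E \<longrightarrow> bij_betw \<sigma> {..<L} {..<L} \<and> \<sigma> ` {..<p (fst e)} = f (snd e) ` T (fst e) (snd e)"
    proof (cases "e \<in> E")
      case True
      obtain i j where e: "e = (i, j)" by fastforce
      have ij: "i < n" "j < m" using True e hE by auto
      have "f j ` T i j \<subseteq> {..<L}" using f[OF ij(2)] TA True e by blast
      moreover have "{..<p i} \<subseteq> {..<L}" using pL ij by auto
      ultimately show ?thesis using perm_exists[of "{..<p i}" L "f j ` T i j"] cardT True e by auto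
    qed simp
  qed
  then obtain \<sigma> where \<sigma>: "\<And>e. e \<in> E \<Longrightarrow> bij_betw (\<sigma> e) {..<L} {..<L} \<and> \<sigma> e ` {..<p (fst e)} = f (snd e) ` T (fst e) (snd e)"
    by metis
  define y where "y i a = (a < p i)" for i a
  have lift: "is_lift E L \<sigma>" using L1 \<sigma> unfolding is_lift_def by auto
  have cw: "lift_codeword m E L \<sigma> y"
    unfolding lift_codeword_def
  proof (intro allI impI)
    fix j c' assume j: "j < m" and c': "c' < L"
    define Z where "Z = {(i, a). (i, j) \<in> E \<and> a < L \<and> \<sigma> (i, j) a = c' \<and> y i a}"
    have "even (card Z)"
    proof (cases "c' \<in> f j ` Act E l \<pi> x j")
      case False
      have "Z = {}"
      proof (rule ccontr)
        assume "Z \<noteq> {}"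
        then obtain i a where ia: "(i, j) \<in> E" "a < p i" "\<sigma> (i, j) a = c'"
          unfolding Z_def y_def by auto
        then have "c' \<in> f j ` T i j" using \<sigma>[OF ia(1)] by force
        then show False using False TA[OF ia(1)] by blast
      qed
      then show ?thesis by simp
    next
      case True
      then obtain c where c: "c \<in> Act E l \<pi> x j" "c' = f j c" by blast
      define O' where "O' = Oset E l \<pi> x j c"
      have inj1: "inj_on fst Z"
      proof (rule inj_onI)
        fix u v assume u: "u \<in> Z" and v: "v \<in> Z" and eq: "fst u = fst v"
        obtain i a where ua: "u = (i, a)" by fastforce
        obtain a' where va: "v = (i, a')" using eq ua by (cases v) auto
        have "(i, j) \<in> E" "a < L" "a' < L" "\<sigma> (i, j) a = \<sigma> (i, j) a'"
          using u v ua va unfolding Z_def by auto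
        then have "a = a'" using \<sigma>[of "(i, j)"] unfolding bij_betw_def inj_on_def by auto
        then show "u = v" using ua va by simp
      qed
      have inj2: "inj_on fst O'"
      proof (rule inj_onI)
        fix u v assume u: "u \<in> O'" and v: "v \<in> O'" and eq: "fst u = fst v"
        obtain i a where ua: "u = (i, a)" by fastforce
        obtain a' where va: "v = (i, a')" using eq ua by (cases v) auto
        have "(i, j) \<in> E" "a < l" "a' < l" "\<pi> (i, j) a = \<pi> (i, j) a'"
          using u v ua va unfolding O'_def Oset_def by auto
        then have "a = a'" using bijE[of "(i, j)"] unfolding bij_betw_def inj_on_def by auto
        then show "u = v" using ua va by simp
      qed
      have img: "fst ` Z = fst ` O'"
      proof
        show "fst ` Z \<subseteq> fst ` O'"
        proof
          fix i assume "i \<in> fst ` Z"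
          then obtain a where ia: "(i, j) \<in> E" "a < p i" "\<sigma> (i, j) a = c'"
            unfolding Z_def y_def by auto
          then have "c' \<in> f j ` T i j" using \<sigma>[OF ia(1)] by force
          then obtain c'' where c'': "c'' \<in> T i j" "f j c'' = c'" by blast
          have "c'' = c" using f[OF j] c c'' TA[OF ia(1)] unfolding inj_on_def by blast
          then obtain a0 where "a0 < l" "x i a0" "\<pi> (i, j) a0 = c"
            using c'' unfolding T_def by auto
          then have "(i, a0) \<in> O'" using ia unfolding O'_def Oset_def by auto
          then show "i \<in> fst ` O'" by force
        qed
        show "fst ` O' \<subseteq> fst ` Z"
        proof
          fix i assume "i \<in> fst ` O'"
          then obtain a0 where a0: "(i, j) \<in> E" "a0 < l" "x i a0" "\<pi> (i, j) a0 = c"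
            unfolding O'_def Oset_def by auto
          then have "c \<in> T i j" unfolding T_def by auto
          then have "c' \<in> \<sigma> (i, j) ` {..<p i}" using \<sigma>[OF a0(1)] c by auto
          then obtain a where a: "a < p i" "\<sigma> (i, j) a = c'" by auto
          have "i < n" using a0 hE by auto
          then have "a < L" using a pL by auto
          then have "(i, a) \<in> Z" using a a0 unfolding Z_def y_def by auto
          then show "i \<in> fst ` Z" by force
        qed
      qed
      have "card Z = card O'"
        using card_image[OF inj1] card_image[OF inj2] img by simp
      moreover have "even (card O')"
        using hc j c unfolding lift_codeword_def O'_def Oset_def Act_def by auto
      ultimately show ?thesis by simp
    qed
    then show "even (card {(i, a). (i, j) \<in> E \<and> a < L \<and> \<sigma> (i, j) a = c' \<and> y i a})"
      unfolding Z_def .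
  qed
  have rp: "\<forall>i<n. p i = card {a. a < L \<and> y i a}"
  proof (intro allI impI)
    fix i assume "i < n"
    then have "{a. a < L \<and> y i a} = {..<p i}" using pL unfolding y_def by auto
    then show "p i = card {a. a < L \<and> y i a}" by simp
  qed
  show ?thesis unfolding realized_in_lift_def using lift cw rp by blast
qed


theorem corollary2:
  fixes n m :: nat and E :: "(nat \<times> nat) set" and p :: "nat \<Rightarrow> nat"
  assumes "tanner_graph n m E"
    and "lift_realizable n m E p"
    and "\<exists>i<n. p i \<noteq> 0"
    and "2 \<le> max_check_degree m E"
  shows "real (LEAST l. realized_in_lift n m E l p)
           \<le> real (max_component n p) * real (max_check_degree m E) / 2"
proof -
  have hE: "E \<subseteq> {..<n} \<times> {..<m}" using assms(1) unfolding tanner_graph_def .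
  obtain l \<pi> x where hl: "is_lift E l \<pi>" and hc: "lift_codeword m E l \<pi> x"
    and hp: "\<forall>i<n. p i = card {a. a < l \<and> x i a}"
    using assms(2) unfolding lift_realizable_def realized_in_lift_def by blast
  define b where "b = max_component n p"
  define d where "d = max_check_degree m E"
  define L where "L = b * d div 2"
  have pb: "p i \<le> b" if "i < n" for i
    unfolding b_def max_component_def using that by (intro Max_ge) auto
  have b1: "1 \<le> b" using assms(3) pb by fastforce
  have d2: "2 \<le> d" using assms(4) unfolding d_def .
  have degd: "card {i. (i, j) \<in> E} \<le> d" if "j < m" for j
    unfolding d_def max_check_degree_def check_degree_def using that by (intro Max_ge) auto
  have "2 * b \<le> b * d" using d2 by simp
  then have bL: "b \<le> L" unfolding L_def by linarith
  have AL: "\<forall>j<m. card (Act E l \<pi> x j) \<le> L"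
  proof (intro allI impI)
    fix j assume j: "j < m"
    have "2 * card (Act E l \<pi> x j) \<le> (\<Sum>i\<in>{i. (i, j) \<in> E}. p i)"
      by (rule count_bound[OF hE hl hc hp j])
    also have "\<dots> \<le> card {i. (i, j) \<in> E} * b"
      by (rule sum_bounded_above[where K = b, simplified]) (use hE pb in auto)
    also have "\<dots> \<le> d * b" using degd[OF j] by simp
    finally show "card (Act E l \<pi> x j) \<le> L" unfolding L_def by (simp add: mult.commute)
  qed
  have "realized_in_lift n m E L p"
    by (rule construct[OF hE hl hc hp]) (use b1 bL pb AL in \<open>auto intro: order_trans\<close>)
  then have "(LEAST l. realized_in_lift n m E l p) \<le> L" by (rule Least_le)
  moreover have "2 * L \<le> b * d" unfolding L_def by simp
  then have "2 * real L \<le> real b * real d" by (metis of_nat_le_iff of_nat_mult of_nat_numeral)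
  ultimately show ?thesis unfolding b_def[symmetric] d_def[symmetric] by simp
qed

end
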